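(* Consider the volume-pricing market described in the context. Then: (i) $R(p)$ is unimodal on $[\eta,\infty)$ (i.e., there is $\hat p>\eta$ with $R'(p)>0$ for $\eta\le p<\hat p$, $R'(\hat p)=0$ and $R'(p)<0$ for $p>\hat p$), and the feasible price set $\mathcal P$ is non-empty and connected. (ii) If $R'(p_0)<0$, then the network is opt-saturated and the unique equilibrium price is $p^\star=p_0=p_0(\kappa_{\mathrm{peak}})$, the threshold price, which satisfies $A(p_0)=C_{3g}$ and, viewing $\kappa_{\mathrm{peak}}$ as a variable, $\frac{\partial p_0(\kappa_{\mathrm{peak}})}{\partial\kappa_{\mathrm{peak}}}>0$. (iii) If $R'(p_0)>0$, then the network is opt-unsaturated and the unique equilibrium price $p^\star=p^\star(\kappa_{\mathrm{avg}})$ is the solution of $R'(p)=0$; moreover, viewing $\kappa_{\mathrm{avg}}$ as a variable, $\frac{\partial\big(p^\star(\kappa_{\mathrm{avg}})\,\kappa_{\mathrm{avg}}\big)}{\partial\kappa_{\mathrm{avg}}}>0$.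
   Context: Market model (single cell). There are $\hat N$ users (treated as a continuum of mass $\hat N$) in one base-station cell with capacity $C_{3g}>0$ (traffic volume per time slot), and time slots $t\in T=\{1,\dots,|T|\}$. Each user's daily traffic demand $\Phi$ is random with density $f_\Phi(x)=x^{-\sigma}/Z$ for $0\le x\le\Phi_{\max}$, where $0<\sigma<1$ and $Z=\Phi_{\max}^{1-\sigma}/(1-\sigma)$. All users share a temporal preference $w(t)> 0$ with $\sum_{t\in T}w(t)=1$; a user with demand $\Phi$ has per-slot demand $\phi(t)=w(t)\Phi$. The willingness to pay is $\gamma(t)=w(t)^{1-\theta}$ with price sensitivity $\theta\in(0,1)$. Offloading indicators: constants $\kappa_{\mathrm{avg}},\kappa_{\mathrm{peak}}\in(0,1]$ (independent of price). Delay profile and WiFi contact probabilities are homogeneous across users and time, so that every user's daily cellular (3G) traffic equals $\kappa_{\mathrm{avg}}$ times its total (3G+WiFi) traffic; and if $X_{\rm tot}(p)$ is the total traffic sent in the cell in a day at price $p$, the peak per-slot cellular traffic is $A(p)=\kappa_{\mathrm{peak}}X_{\rm tot}(p)$. Volume pricing with unit price $p>0$ per unit of cellular traffic: a user with demand $\Phi$ chooses $x(t)\in[0,\phi(t)]$ to maximize $\sum_{t}w(t)^{1-\theta}x(t)^\theta-p\,\kappa_{\mathrm{avg}}\sum_t x(t)$; its optimal choice is $x^\star_\Phi(t)=w(t)\min\{\Phi,(\theta/(p\kappa_{\mathrm{avg}}))^{1/(1-\theta)}\}$ (every user participates). Then $X_{\rm tot}(p)=\hat N\int_0^{\Phi_{\max}}\sum_t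 x^\star_\Phi(t)f_\Phi(\Phi)\,d\Phi$, and the provider's revenue with linear cellular cost coefficient $\eta>0$ is $R(p)=(p-\eta)\,\kappa_{\mathrm{avg}}X_{\rm tot}(p)$. Feasible price set: $\mathcal P=\{p: R(p)>0,\ A(p)\le C_{3g}\}$; threshold price $p_0=\inf\mathcal P$. An equilibrium price is any $p^\star\in\arg\max_{p\in\mathcal P}R(p)$. The network is saturated at $p$ if $A(p)=C_{3g}$; for a unique equilibrium price $p^\star$, the network is called opt-saturated if it is saturated at $p^\star$ and opt-unsaturated otherwise. *)

theory Defs
  imports "HOL-Analysis.Analysis"
begin

definition dens :: "real \<Rightarrow> real \<Rightarrow> real \<Rightarrow> real" where
  "dens \<sigma> Phimax x = x powr (- \<sigma>) / (Phimax powr (1 - \<sigma>) / (1 - \<sigma>))"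

text \<open>Unconstrained optimal daily volume (theta / (p kappa_avg))^(1/(1-theta)).\<close>
definition user_cap :: "real \<Rightarrow> real \<Rightarrow> real \<Rightarrow> real" where
  "user_cap \<theta> ka p = (\<theta> / (p * ka)) powr (1 / (1 - \<theta>))"

definition xstar :: "(nat \<Rightarrow> real) \<Rightarrow> real \<Rightarrow> real \<Rightarrow> real \<Rightarrow> real \<Rightarrow> nat \<Rightarrow> real" where
  "xstar w \<theta> ka p Phi t = w t * min Phi (user_cap \<theta> ka p)"

text \<open>Total (3G + WiFi) daily traffic in the cell at price p, time slots T = {1..nT}.\<close>
definition Xtot :: "real \<Rightarrow> real \<Rightarrow> real \<Rightarrow> nat \<Rightarrow> (nat \<Rightarrow> real) \<Rightarrow> real \<Rightarrow> real \<Rightarrow> real \<Rightarrow> real" where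
  "Xtot N Phimax \<sigma> nT w \<theta> ka p =
     N * integral {0..Phimax} (\<lambda>Phi. (\<Sum>t = 1..nT. xstar w \<theta> ka p Phi t) * dens \<sigma> Phimax Phi)"

end

theory Submission
  imports Defs
begin


lemma int_pow1:
  fixes s b :: real
  assumes "0 < s" "s < 1" "0 \<le> b"
  shows "((\<lambda>x. x powr (1 - s)) has_integral (b powr (2 - s) / (2 - s))) {0..b}"
proof -
  have "((\<lambda>x. x powr (1 - s)) has_integral ((\<lambda>x. x powr (2 - s) / (2 - s)) b - (\<lambda>x. x powr (2 - s) / (2 - s)) 0)) {0..b}"
  proof (rule fundamental_theorem_of_calculus_interior)
    show "continuous_on {0..b} (\<lambda>x. x powr (2 - s) / (2 - s))"
      using assms by (intro continuous_intros continuous_on_powr') auto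
    fix x assume x: "x \<in> {0<..<b}"
    have "((\<lambda>x. x powr (2 - s) / (2 - s)) has_real_derivative ((2 - s) * x powr (2 - s - 1) / (2 - s))) (at x)"
      using x by (auto intro!: derivative_eq_intros)
    moreover have "(2 - s) * x powr (2 - s - 1) / (2 - s) = x powr (1 - s)"
      using assms by (simp add: diff_diff_eq2)
    ultimately show "((\<lambda>x. x powr (2 - s) / (2 - s)) has_vector_derivative x powr (1 - s)) (at x)"
      by (simp add: has_real_derivative_iff_has_vector_derivative)
  qed (use assms in auto)
  then show ?thesis by simp
qed

lemma int_pow2:
  fixes s b c :: real
  assumes "0 < s" "s < 1" "0 < c" "c \<le> b"
  shows "((\<lambda>x. x powr (- s)) has_integral ((b powr (1 - s) - c powr (1 - s)) / (1 - s))) {c..b}"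
proof -
  have "((\<lambda>x. x powr (- s)) has_integral ((\<lambda>x. x powr (1 - s) / (1 - s)) b - (\<lambda>x. x powr (1 - s) / (1 - s)) c)) {c..b}"
  proof (rule fundamental_theorem_of_calculus_interior)
    show "continuous_on {c..b} (\<lambda>x. x powr (1 - s) / (1 - s))"
      using assms by (intro continuous_intros continuous_on_powr') auto
    fix x assume x: "x \<in> {c<..<b}"
    have "((\<lambda>x. x powr (1 - s) / (1 - s)) has_real_derivative ((1 - s) * x powr (1 - s - 1) / (1 - s))) (at x)"
      using x assms by (auto intro!: derivative_eq_intros)
    moreover have "(1 - s) * x powr (1 - s - 1) / (1 - s) = x powr (- s)"
      using assms by simp
    ultimately show "((\<lambda>x. x powr (1 - s) / (1 - s)) has_vector_derivative x powr (- s)) (at x)"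
      by (simp add: has_real_derivative_iff_has_vector_derivative)
  qed (use assms in auto)
  then show ?thesis by (simp add: diff_divide_distrib)
qed

lemma powr_split1: "0 < (x::real) \<Longrightarrow> x powr (2 - s) = x * x powr (1 - s)"
proof -
  assume "0 < x"
  then have "x powr (2 - s) = x powr (1 + (1 - s))" by simp
  also have "\<dots> = x powr 1 * x powr (1 - s)" by (rule powr_add)
  finally show ?thesis using \<open>0 < x\<close> by simp
qed

lemma powr_split2: "0 \<le> (x::real) \<Longrightarrow> x * x powr (- s) = x powr (1 - s)"
proof (cases "x = 0")
  case False
  assume "0 \<le> x"
  then have "0 < x" using False by simp
  have "x powr (1 - s) = x powr (1 + (- s))" by simp
  also have "\<dots> = x powr 1 * x powr (- s)" by (rule powr_add)
  finally show ?thesis using \<open>0 < x\<close> by simp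
qed simp

lemma integral_closed:
  fixes s Pm u :: real
  assumes s: "0 < s" "s < 1" and Pm: "0 < Pm" and u: "0 < u"
  shows "integral {0..Pm} (\<lambda>x. min x u * dens s Pm x)
         = min u Pm * (1 - (min u Pm / Pm) powr (1 - s) / (2 - s))"
proof -
  define Z where "Z = Pm powr (1 - s) / (1 - s)"
  have Zpos: "Z > 0" using s Pm by (simp add: Z_def)
  have densZ: "dens s Pm x = x powr (- s) / Z" for x by (simp add: dens_def Z_def)
  define M where "M = Pm powr (1 - s)"
  have Mpos: "M > 0" using Pm by (simp add: M_def)
  show ?thesis
  proof (cases "Pm \<le> u")
    case True
    have eq: "min x u * dens s Pm x = x powr (1 - s) / Z" if "x \<in> {0..Pm}" for x
      using that True powr_split2[of x s] by (simp add: densZ)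
    have "((\<lambda>x. x powr (1 - s) / Z) has_integral (Pm powr (2 - s) / (2 - s) / Z)) {0..Pm}"
      by (rule has_integral_divide, rule int_pow1) (use s Pm in auto)
    then have "((\<lambda>x. min x u * dens s Pm x) has_integral (Pm powr (2 - s) / (2 - s) / Z)) {0..Pm}"
      by (rule has_integral_eq[rotated]) (simp add: eq)
    then have "integral {0..Pm} (\<lambda>x. min x u * dens s Pm x) = Pm powr (2 - s) / (2 - s) / Z"
      by blast
    also have "\<dots> = Pm * (1 - 1 / (2 - s))"
      using s Pm Mpos by (simp add: powr_split1 Z_def M_def[symmetric] field_simps)
    finally show ?thesis using True Pm by simp
  next
    case False
    define A where "A = u powr (1 - s)"
    have eq1: "min x u * dens s Pm x = x powr (1 - s) / Z" if "x \<in> {0..u}" for x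
      using that powr_split2[of x s] by (simp add: densZ)
    have eq2: "min x u * dens s Pm x = u * x powr (- s) / Z" if "x \<in> {u..Pm}" for x
      using that by (simp add: densZ)
    have "((\<lambda>x. x powr (1 - s) / Z) has_integral (u powr (2 - s) / (2 - s) / Z)) {0..u}"
      by (rule has_integral_divide, rule int_pow1) (use s u in auto)
    then have i1: "((\<lambda>x. min x u * dens s Pm x) has_integral (u powr (2 - s) / (2 - s) / Z)) {0..u}"
      by (rule has_integral_eq[rotated]) (metis eq1)
    have "((\<lambda>x. u * x powr (- s) / Z) has_integral (u * ((Pm powr (1 - s) - u powr (1 - s)) / (1 - s)) / Z)) {u..Pm}"
      by (rule has_integral_divide, rule has_integral_mult_right, rule int_pow2) (use s u False in auto)
    then have i2: "((\<lambda>x. min x u * dens s Pm x) has_integral (u * ((Pm powr (1 - s) - u powr (1 - s)) / (1 - s)) / Z)) {u..Pm}"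
      by (rule has_integral_eq[rotated]) (metis eq2)
    have "((\<lambda>x. min x u * dens s Pm x) has_integral
       (u powr (2 - s) / (2 - s) / Z + u * ((Pm powr (1 - s) - u powr (1 - s)) / (1 - s)) / Z)) {0..Pm}"
      by (rule has_integral_combine[OF _ _ i1 i2]) (use u False in auto)
    then have "integral {0..Pm} (\<lambda>x. min x u * dens s Pm x) =
       u powr (2 - s) / (2 - s) / Z + u * ((Pm powr (1 - s) - u powr (1 - s)) / (1 - s)) / Z"
      by blast
    also have "\<dots> = u * A / (2 - s) / (M / (1 - s)) + u * ((M - A) / (1 - s)) / (M / (1 - s))"
      using u by (simp add: powr_split1 Z_def M_def[symmetric] A_def[symmetric])
    also have "\<dots> = u * (1 - (A / M) / (2 - s))"
    proof -
      have "2 - s \<noteq> 0" "1 - s \<noteq> 0" "M \<noteq> 0" using s Mpos by auto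
      then have e1: "u * A / (2 - s) / (M / (1 - s)) = u * A * (1 - s) / ((2 - s) * M)"
        by (simp add: field_simps)
      have e2: "u * ((M - A) / (1 - s)) / (M / (1 - s)) = u - u * A / M"
        using \<open>1 - s \<noteq> 0\<close> \<open>M \<noteq> 0\<close> by (simp add: field_simps)
      have e3: "u * A * (1 - s) / ((2 - s) * M) = u * A / M - u * A / M / (2 - s)"
        using \<open>2 - s \<noteq> 0\<close> \<open>M \<noteq> 0\<close> by (simp add: field_simps)
      show ?thesis unfolding e1 e2 e3 by (simp add: algebra_simps)
    qed
    also have "A / M = (u / Pm) powr (1 - s)"
      using u Pm by (simp add: A_def M_def powr_divide)
    finally show ?thesis using False by simp
  qed
qed



lemma deriv0_squeeze:
  fixes f g :: "real \<Rightarrow> real"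
  assumes g: "DERIV g x :> 0" and ev: "eventually (\<lambda>y. \<bar>f y - f x\<bar> \<le> \<bar>g y - g x\<bar>) (at x)"
  shows "DERIV f x :> 0"
proof -
  have "((\<lambda>y. (g y - g x) / (y - x)) \<longlongrightarrow> 0) (at x)"
    using g by (simp add: has_field_derivative_iff)
  then have gt: "((\<lambda>y. \<bar>(g y - g x) / (y - x)\<bar>) \<longlongrightarrow> 0) (at x)"
    by (rule tendsto_rabs_zero)
  have "eventually (\<lambda>y. norm ((f y - f x) / (y - x)) \<le> \<bar>(g y - g x) / (y - x)\<bar>) (at x)"
    using ev by eventually_elim (simp add: abs_divide divide_right_mono)
  from Lim_null_comparison[OF this gt] show ?thesis
    by (simp add: has_field_derivative_iff)
qed

definition psi :: "real \<Rightarrow> real \<Rightarrow> real \<Rightarrow> real" where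
  "psi Pm s v = min v Pm * (1 - (min v Pm / Pm) powr (1 - s) / (2 - s))"

definition gg :: "real \<Rightarrow> real \<Rightarrow> real \<Rightarrow> real" where
  "gg Pm s v = v * (1 - (v / Pm) powr (1 - s) / (2 - s))"

lemma gg_deriv:
  assumes s: "0 < s" "s < 1" and Pm: "0 < Pm" and v: "0 < v"
  shows "DERIV (gg Pm s) v :> 1 - (v / Pm) powr (1 - s)"
proof -
  have d: "DERIV (gg Pm s) v :> (1 - (v / Pm) powr (1 - s) / (2 - s)) +
      v * (- ((1 - s) * (v / Pm) powr (1 - s - 1) * (1 / Pm)) / (2 - s))"
    unfolding gg_def using v Pm s
    by (auto intro!: derivative_eq_intros)
  have "v * ((v / Pm) powr (1 - s - 1) * (1 / Pm)) = (v / Pm) * (v / Pm) powr (- s)"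
    by simp
  also have "\<dots> = (v / Pm) powr (1 - s)" using v Pm by (intro powr_split2) simp
  finally have e: "v * ((v / Pm) powr (1 - s - 1) * (1 / Pm)) = (v / Pm) powr (1 - s)" .
  have "(1 - (v / Pm) powr (1 - s) / (2 - s)) +
      v * (- ((1 - s) * (v / Pm) powr (1 - s - 1) * (1 / Pm)) / (2 - s))
    = (1 - (v / Pm) powr (1 - s) / (2 - s)) - (1 - s) * (v * ((v / Pm) powr (1 - s - 1) * (1 / Pm))) / (2 - s)"
    using s by (simp add: field_simps)
  also have "\<dots> = 1 - (v / Pm) powr (1 - s)"
  proof -
    define r where "r = (v / Pm) powr (1 - s)"
    have ne: "2 - s \<noteq> 0" using s by simp
    have "r / (2 - s) + (1 - s) * r / (2 - s) = (r + (1 - s) * r) / (2 - s)"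
      by (simp add: add_divide_distrib)
    also have "r + (1 - s) * r = (2 - s) * r" by (simp add: algebra_simps)
    finally have "r / (2 - s) + (1 - s) * r / (2 - s) = r" using ne by simp
    then show ?thesis unfolding e r_def[symmetric] by (simp add: algebra_simps)
  qed
  finally show ?thesis by (rule DERIV_cong[OF d])
qed

lemma psi_deriv:
  assumes s: "0 < s" "s < 1" and Pm: "0 < Pm" and v: "0 < v"
  shows "DERIV (psi Pm s) v :> 1 - (min v Pm / Pm) powr (1 - s)"
proof (cases "v < Pm")
  case True
  have "DERIV (gg Pm s) v :> 1 - (v / Pm) powr (1 - s)" by (rule gg_deriv[OF s Pm v])
  then have "DERIV (psi Pm s) v :> 1 - (v / Pm) powr (1 - s)"
    by (rule has_field_derivative_transform_within_open[where S="{..<Pm}"])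
       (use True in \<open>auto simp: psi_def gg_def\<close>)
  then show ?thesis using True by simp
next
  case False
  show ?thesis
  proof (cases "v = Pm")
    case False
    with \<open>\<not> v < Pm\<close> have vP: "v > Pm" by simp
    have "DERIV (\<lambda>_. psi Pm s Pm) v :> 0" by simp
    then have "DERIV (psi Pm s) v :> 0"
      by (rule has_field_derivative_transform_within_open[where S="{Pm<..}"])
         (use vP in \<open>auto simp: psi_def\<close>)
    then show ?thesis using vP Pm by simp
  next
    case True
    have g0: "DERIV (gg Pm s) Pm :> 0" using gg_deriv[OF s Pm Pm] Pm by simp
    have "eventually (\<lambda>y. \<bar>psi Pm s y - psi Pm s Pm\<bar> \<le> \<bar>gg Pm s y - gg Pm s Pm\<bar>) (at Pm)"
    proof (rule always_eventually, rule allI)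
      fix y
      show "\<bar>psi Pm s y - psi Pm s Pm\<bar> \<le> \<bar>gg Pm s y - gg Pm s Pm\<bar>"
        by (cases "y \<le> Pm") (auto simp: psi_def gg_def min_def)
    qed
    from deriv0_squeeze[OF g0 this] show ?thesis using True Pm by simp
  qed
qed



locale mkt =
  fixes N Pm s th eta :: real
  assumes N: "N > 0" and Pm: "Pm > 0" and s: "0 < s" "s < 1" and th: "0 < th" "th < 1"
    and eta: "eta > 0"
begin

definition "bet = 1 / (1 - th)"
definition "U q = (th / q) powr bet"
definition "mm q = min (U q) Pm"
definition "rho q = (mm q / Pm) powr (1 - s)"
definition "Y q = N * psi Pm s (U q)"
definition "dY q = - N * bet * (1 - rho q) * mm q / q"
definition "q1 = th / Pm powr (1 - th)"

lemma bet_gt1: "bet > 1" using th by (simp add: bet_def)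

lemma U_pos: "q > 0 \<Longrightarrow> U q > 0" using th by (simp add: U_def)

lemma U_inv: assumes "e > 0" shows "U (th / e powr (1 - th)) = e"
proof -
  have "U (th / e powr (1 - th)) = (e powr (1 - th)) powr bet"
    using th assms by (simp add: U_def)
  also have "\<dots> = e" using th assms by (simp add: powr_powr bet_def)
  finally show ?thesis .
qed

lemma U_strict: "0 < q \<Longrightarrow> q < q' \<Longrightarrow> U q' < U q"
  unfolding U_def using th bet_gt1
  by (intro powr_less_mono2) (auto intro!: divide_strict_left_mono)

lemma U_mono: "0 < q \<Longrightarrow> q \<le> q' \<Longrightarrow> U q' \<le> U q"
  using U_strict by (cases "q = q'") (auto simp: less_le)

lemma q1_pos: "q1 > 0" using th Pm by (simp add: q1_def)

lemma U_q1: "U q1 = Pm" unfolding q1_def using Pm by (rule U_inv)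

lemma U_lt_Pm: "q > 0 \<Longrightarrow> U q < Pm \<longleftrightarrow> q > q1"
  using U_strict[of q q1] U_strict[of q1 q] U_q1 q1_pos by (cases q q1 rule: linorder_cases) auto

lemma U_deriv: assumes "q > 0" shows "DERIV U q :> - bet * U q / q"
proof -
  have "DERIV U q :> bet * (th / q) powr (bet - 1) * (- (th / q^2))"
    unfolding U_def using assms th
    by (auto intro!: derivative_eq_intros simp: power2_eq_square field_simps)
  moreover have "bet * (th / q) powr (bet - 1) * (- (th / q^2)) = - bet * U q / q"
  proof -
    have "(th / q) powr (bet - 1) * (th / q) = (th / q) powr bet"
      using assms th by (simp add: powr_diff)
    then show ?thesis unfolding U_def using assms
      by (simp add: power2_eq_square field_simps)
  qed
  ultimately show ?thesis by simp
qed

lemma mm_pos: "q > 0 \<Longrightarrow> mm q > 0" using U_pos Pm by (simp add: mm_def)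
lemma mm_le: "mm q \<le> Pm" by (simp add: mm_def)

lemma rho_pos: assumes "q > 0" shows "rho q > 0"
proof -
  have "mm q > 0" using mm_pos[OF assms] .
  then show ?thesis using Pm by (simp add: rho_def)
qed
lemma rho_le1: "q > 0 \<Longrightarrow> rho q \<le> 1"
  unfolding rho_def using mm_pos[of q] mm_le[of q] Pm s by (intro powr_le1) auto
lemma rho_eq1: "q > 0 \<Longrightarrow> q \<le> q1 \<Longrightarrow> rho q = 1"
  using U_lt_Pm[of q] Pm by (simp add: rho_def mm_def)
lemma rho_lt1: assumes "q > q1" shows "rho q < 1"
proof -
  have q: "q > 0" using assms q1_pos by simp
  have "mm q / Pm < 1" using U_lt_Pm[OF q] assms Pm by (simp add: mm_def)
  then have "(mm q / Pm) powr (1 - s) < 1 powr (1 - s)"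
    using s mm_pos[OF q] Pm by (intro powr_less_mono2) auto
  then show ?thesis by (simp add: rho_def)
qed
lemma rho_mono: "0 < q \<Longrightarrow> q \<le> q' \<Longrightarrow> rho q' \<le> rho q"
  unfolding rho_def mm_def using U_mono[of q q'] U_pos[of q'] Pm s
  by (intro powr_mono2) (auto intro!: divide_right_mono)

lemma Y_alt: "Y q = N * mm q * (1 - rho q / (2 - s))"
  by (simp add: Y_def psi_def mm_def rho_def min.commute)

lemma Y_pos: assumes "q > 0" shows "Y q > 0"
proof -
  have "rho q / (2 - s) < 1" using rho_le1[OF assms] s by (simp add: divide_less_eq)
  then show ?thesis unfolding Y_alt using N mm_pos[OF assms] by simp
qed

lemma Y_deriv: assumes q: "q > 0" shows "DERIV Y q :> dY q"
proof -
  have "DERIV (\<lambda>q. N * psi Pm s (U q)) q :> N * ((1 - (min (U q) Pm / Pm) powr (1 - s)) * (- bet * U q / q))"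
    by (intro DERIV_cmult DERIV_chain2[OF psi_deriv U_deriv]) (use s Pm U_pos q in auto)
  moreover have "N * ((1 - (min (U q) Pm / Pm) powr (1 - s)) * (- bet * U q / q)) = dY q"
  proof (cases "U q < Pm")
    case True then show ?thesis by (simp add: dY_def rho_def mm_def)
  next
    case False then show ?thesis using Pm by (simp add: dY_def rho_def mm_def)
  qed
  ultimately show ?thesis by (simp add: Y_def[abs_def])
qed

lemma Y_isCont: "q > 0 \<Longrightarrow> isCont Y q" using Y_deriv DERIV_isCont by blast

lemma dY_nonpos: "q > 0 \<Longrightarrow> dY q \<le> 0"
  using rho_le1[of q] mm_pos[of q] bet_gt1 N by (simp add: dY_def field_simps)

lemma dY_neg: assumes "q > q1" shows "dY q < 0"
proof -
  have q: "q > 0" using assms q1_pos by simp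
  show ?thesis using rho_lt1[OF assms] mm_pos[OF q] bet_gt1 N q by (simp add: dY_def field_simps)
qed

lemma Y_mono: assumes "0 < q" "q \<le> q'" shows "Y q' \<le> Y q"
proof (rule DERIV_nonpos_imp_nonincreasing[OF assms(2)])
  fix x assume "q \<le> x" "x \<le> q'"
  then have "x > 0" using assms by simp
  then show "\<exists>y. DERIV Y x :> y \<and> y \<le> 0" using Y_deriv dY_nonpos by blast
qed

lemma Y_strict: assumes "0 < q" "q < q'" "q1 < q'" shows "Y q' < Y q"
proof -
  define c where "c = max q q1"
  have c: "0 < c" "q \<le> c" "c < q'" using assms q1_pos by (auto simp: c_def)
  have "Y q' < Y c"
  proof (rule DERIV_neg_imp_decreasing_open[OF c(3)])
    fix x assume "c < x" "x < q'"
    then have "x > q1" "x > 0" using c by (auto simp: c_def)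
    then show "\<exists>y. DERIV Y x :> y \<and> y < 0" using Y_deriv dY_neg by blast
  next
    show "continuous_on {c..q'} Y"
      using c by (intro continuous_at_imp_continuous_on) (auto intro!: Y_isCont)
  qed
  also have "Y c \<le> Y q" using Y_mono[of q c] c assms by simp
  finally show ?thesis .
qed

end


context mkt begin

definition "Sg k p = 1 - rho (p * k) / (2 - s) - bet * (1 - rho (p * k)) * (1 - eta / p)"
definition "RR k p = (p - eta) * k * Y (p * k)"
definition "psi2 x = 1 / (2 - s) + (1 - 1 / (2 - s)) / (1 - x)"

lemma U_cont: "q > 0 \<Longrightarrow> isCont U q" using U_deriv DERIV_isCont by blast

lemma rho_isCont: assumes "q > 0" shows "isCont rho q"
proof -
  have "isCont (\<lambda>q. (min (U q) Pm / Pm) powr (1 - s)) q"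
    using U_cont[OF assms] U_pos[OF assms] Pm by (intro continuous_intros) auto
  then show ?thesis by (simp add: rho_def[abs_def] mm_def[abs_def])
qed

lemma Sg_isCont: assumes "k > 0" "p > 0" shows "isCont (Sg k) p"
proof -
  have "isCont (\<lambda>p. rho (p * k)) p"
    using assms by (intro continuous_intros isCont_o2[OF _ rho_isCont]) auto
  then have "isCont (\<lambda>p. 1 - rho (p * k) / (2 - s) - bet * (1 - rho (p * k)) * (1 - eta / p)) p"
    using assms s by (intro continuous_intros) auto
  then show ?thesis by (simp add: Sg_def[abs_def])
qed

lemma RR_deriv: assumes k: "k > 0" and p: "p > 0"
  shows "DERIV (RR k) p :> k * N * mm (p * k) * Sg k p"
proof -
  have pk: "p * k > 0" using k p by simp
  have dk: "DERIV (\<lambda>x. x * k) p :> k" by (auto intro!: derivative_eq_intros)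
  have dYk: "DERIV (\<lambda>x. Y (x * k)) p :> dY (p * k) * k"
  proof -
    have "DERIV Y ((\<lambda>x. x * k) p) :> dY (p * k)" using Y_deriv[OF pk] by simp
    from DERIV_chain'[OF dk this] show ?thesis .
  qed
  have "DERIV (RR k) p :> 1 * k * Y (p * k) + (p - eta) * k * (dY (p * k) * k)"
    unfolding RR_def[abs_def]
    by (rule derivative_eq_intros refl dYk | simp)+
  moreover have "1 * k * Y (p * k) + (p - eta) * k * (dY (p * k) * k) = k * N * mm (p * k) * Sg k p"
  proof -
    define r where "r = rho (p * k)"
    define m where "m = mm (p * k)"
    have "(p - eta) * k * (dY (p * k) * k) = - k * N * m * (bet * (1 - r) * ((p - eta) / p))"
      using k p by (simp add: dY_def r_def m_def field_simps)
    moreover have "(p - eta) / p = 1 - eta / p" using p by (simp add: field_simps)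
    ultimately have B: "(p - eta) * k * (dY (p * k) * k) = - k * N * m * (bet * (1 - r) * (1 - eta / p))"
      by simp
    have A: "1 * k * Y (p * k) = k * N * m * (1 - r / (2 - s))"
      by (simp add: Y_alt r_def m_def)
    have Sg: "Sg k p = 1 - r / (2 - s) - bet * (1 - r) * (1 - eta / p)"
      by (simp add: Sg_def r_def)
    define e where "e = 1 - eta / p"
    show ?thesis unfolding A B Sg m_def[symmetric] e_def[symmetric]
      by (simp add: algebra_simps)
  qed
  ultimately show ?thesis by simp
qed

lemma Sg_pos_low: assumes k: "k > 0" and p: "p > 0" and c: "p \<le> eta \<or> p * k \<le> q1"
  shows "Sg k p > 0"
proof -
  have r: "0 < rho (p * k)" "rho (p * k) \<le> 1" using rho_pos rho_le1 k p by auto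
  have a: "rho (p * k) / (2 - s) < 1" using r s by (simp add: divide_less_eq)
  show ?thesis
  proof (cases "p \<le> eta")
    case True
    then have "1 - eta / p \<le> 0" using p by (simp add: divide_le_eq)
    then have "bet * (1 - rho (p * k)) * (1 - eta / p) \<le> 0"
      using bet_gt1 r by (intro mult_nonneg_nonpos) auto
    then show ?thesis using a by (simp add: Sg_def)
  next
    case False
    then have "rho (p * k) = 1" using c rho_eq1 k p by simp
    then show ?thesis using s by (simp add: Sg_def)
  qed
qed

lemma psi2_mono: assumes "0 \<le> x" "x \<le> y" "y < 1" shows "psi2 x \<le> psi2 y"
proof -
  have "1 - 1 / (2 - s) \<ge> 0" using s by (simp add: divide_le_eq)
  moreover have "0 < 1 - y" "1 - y \<le> 1 - x" using assms by auto
  ultimately have "(1 - 1 / (2 - s)) / (1 - x) \<le> (1 - 1 / (2 - s)) / (1 - y)"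
    by (intro divide_left_mono) auto
  then show ?thesis by (simp add: psi2_def)
qed

lemma Sg_factor: assumes "rho (p * k) < 1"
  shows "Sg k p = (1 - rho (p * k)) * (psi2 (rho (p * k)) - bet * (1 - eta / p))"
proof -
  define r where "r = rho (p * k)"
  have r1: "1 - r \<noteq> 0" using assms by (simp add: r_def)
  have s2: "2 - s \<noteq> 0" using s by simp
  define a where "a = 1 / (2 - s)"
  have "(1 - r) * psi2 r = (1 - r) * a + (1 - a)"
    using r1 by (simp add: psi2_def a_def[symmetric] distrib_left)
  also have "\<dots> = 1 - r * a" by (simp add: algebra_simps)
  also have "r * a = r / (2 - s)" by (simp add: a_def)
  finally have eq: "(1 - r) * psi2 r = 1 - r / (2 - s)" .
  define e where "e = 1 - eta / p"
  have "(1 - r) * (psi2 r - bet * e) = (1 - r) * psi2 r - bet * (1 - r) * e"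
    by (simp add: algebra_simps)
  then show ?thesis unfolding Sg_def r_def[symmetric] e_def[symmetric] eq by simp
qed

end


context mkt begin

definition "Tf k p = psi2 (rho (p * k)) - bet * (1 - eta / p)"

lemma Tf_strict: assumes k: "k > 0" and pa: "q1 < p * k" and pp: "p < p'"
  shows "Tf k p' < Tf k p"
proof -
  have "p * k > 0" using pa q1_pos by linarith
  then have p: "p > 0" using k by (simp add: zero_less_mult_iff)
  have pk: "p * k > 0" using p k by simp
  have pk': "p * k \<le> p' * k" using pp k by simp
  have r1: "rho (p' * k) \<le> rho (p * k)" by (rule rho_mono[OF pk pk'])
  have r2: "rho (p * k) < 1" using rho_lt1 pa by simp
  have r3: "0 \<le> rho (p' * k)" using rho_pos[of "p' * k"] pk pk' by simp
  have A: "psi2 (rho (p' * k)) \<le> psi2 (rho (p * k))" by (rule psi2_mono[OF r3 r1 r2])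
  have "eta / p' < eta / p" using eta p pp by (simp add: divide_strict_left_mono)
  then have B: "bet * (1 - eta / p) < bet * (1 - eta / p')" using bet_gt1 by simp
  show ?thesis using A B by (simp add: Tf_def)
qed

lemma Sg_Tf: assumes k: "k > 0" and pa: "q1 < p * k"
  shows "Sg k p = (1 - rho (p * k)) * Tf k p" "1 - rho (p * k) > 0"
  using Sg_factor[OF rho_lt1[OF pa]] rho_lt1[OF pa] by (auto simp: Tf_def)

lemma unimodal: assumes k: "k > 0"
  shows "\<exists>ph. ph > eta \<and> ph * k > q1 \<and> Sg k ph = 0 \<and> (\<forall>p. 0 < p \<and> p < ph \<longrightarrow> Sg k p > 0)
      \<and> (\<forall>p. ph < p \<longrightarrow> Sg k p < 0)"
proof -
  define pa where "pa = max eta (q1 / k)"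
  have pa_pos: "pa > 0" using eta by (simp add: pa_def)
  have Sa: "Sg k pa > 0"
  proof (rule Sg_pos_low[OF k pa_pos])
    show "pa \<le> eta \<or> pa * k \<le> q1"
      using k by (cases "eta \<le> q1 / k") (auto simp: pa_def max_def)
  qed
  define d where "d = th / 4"
  have d: "0 < d" "d < 1" using th by (auto simp: d_def)
  define e where "e = Pm * d powr (1 / (1 - s))"
  have e: "e > 0" using Pm d by (simp add: e_def)
  define qb where "qb = th / e powr (1 - th)"
  have qb: "qb > 0" "U qb = e" using th e by (auto simp: qb_def U_inv)
  define pb where "pb = max (max pa (eta / d)) (qb / k) + 1"
  have pb1: "pb > pa" "pb > eta / d" "pb > qb / k" by (auto simp: pb_def)
  have pb_pos: "pb > 0" using pb1 pa_pos by simp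
  have pbk: "pb * k > qb" using pb1 k by (simp add: divide_less_eq)
  have rb: "rho (pb * k) \<le> d"
  proof -
    have "mm (pb * k) \<le> e"
      using U_mono[of qb "pb * k"] qb pbk by (simp add: mm_def)
    then have "rho (pb * k) \<le> (e / Pm) powr (1 - s)"
      unfolding rho_def using s Pm mm_pos[of "pb * k"] pb_pos k
      by (intro powr_mono2) (auto intro: divide_right_mono)
    also have "(e / Pm) powr (1 - s) = d"
      using Pm s d by (simp add: e_def powr_powr)
    finally show ?thesis .
  qed
  have eb: "eta / pb < d" using pb1 d pb_pos by (simp add: divide_less_eq mult.commute)
  have Sb: "Sg k pb < 0"
  proof -
    define r where "r = rho (pb * k)"
    define f where "f = 1 - eta / pb"
    have r0: "0 \<le> r" using rho_pos[of "pb * k"] pb_pos k by (simp add: r_def)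
    have "(1 - d) * (1 - d) \<le> (1 - r) * f"
      using rb eb d by (intro mult_mono) (auto simp: r_def f_def)
    moreover have "1 - 2 * d \<le> (1 - d) * (1 - d)" by (simp add: algebra_simps)
    ultimately have "bet * (1 - 2 * d) \<le> bet * ((1 - r) * f)"
      using bet_gt1 by (intro mult_left_mono) auto
    moreover have "bet * (1 - 2 * d) > 1"
      using th by (simp add: bet_def d_def field_simps)
    moreover have "r / (2 - s) \<ge> 0" using r0 s by simp
    moreover have "Sg k pb = 1 - r / (2 - s) - bet * ((1 - r) * f)"
      by (simp add: Sg_def r_def f_def)
    ultimately show ?thesis by linarith
  qed
  obtain ph where ph: "pa \<le> ph" "ph \<le> pb" "Sg k ph = 0"
    using IVT2[of "Sg k" pb 0 pa] Sa Sb pb1 pa_pos Sg_isCont[OF k] by force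
  have ph_pa: "ph > pa" using ph Sa by (cases "ph = pa") auto
  have phk: "ph * k > q1" using ph_pa k by (simp add: pa_def divide_less_eq)
  have Tph: "Tf k ph = 0" using Sg_Tf[OF k phk] ph by simp
  show ?thesis
  proof (intro exI conjI allI impI)
    show "ph > eta" using ph_pa by (simp add: pa_def)
    show "ph * k > q1" by (rule phk)
    show "Sg k ph = 0" by (rule ph(3))
  next
    fix p assume p: "0 < p \<and> p < ph"
    show "Sg k p > 0"
    proof (cases "p \<le> pa")
      case True
      then have "p \<le> eta \<or> p * k \<le> q1"
        using k by (cases "eta \<le> q1 / k") (auto simp: pa_def max_def pos_le_divide_eq)
      then show ?thesis using Sg_pos_low[OF k] p by blast
    next
      case False
      then have "p > q1 / k" by (simp add: pa_def)
      then have pk: "p * k > q1" using k by (simp add: divide_less_eq)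
      have "Tf k ph < Tf k p" using Tf_strict[OF k pk] p by simp
      then show ?thesis using Sg_Tf[OF k pk] Tph by simp
    qed
  next
    fix p assume p: "ph < p"
    have pk: "p * k > q1" using p phk k by (meson less_trans mult_strict_right_mono)
    have "Tf k p < Tf k ph" using Tf_strict[OF k phk] p by simp
    then show "Sg k p < 0" using Sg_Tf[OF k pk] Tph by (simp add: mult_pos_neg)
  qed
qed

end


lemma inv_deriv:
  fixes f g :: "real \<Rightarrow> real"
  assumes d: "d > 0" and inj: "\<And>z. \<bar>z - x\<bar> \<le> d \<Longrightarrow> g (f z) = z"
    and cont: "\<And>z. \<bar>z - x\<bar> \<le> d \<Longrightarrow> isCont f z"
    and lo: "f (x - d) < f x" and hi: "f x < f (x + d)"
    and der: "DERIV f x :> D" and D: "D \<noteq> 0"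
  shows "DERIV g (f x) :> inverse D"
proof -
  have gx: "g (f x) = x" using inj[of x] d by simp
  have cg: "isCont g (f x)" by (rule isCont_inverse_function[OF d inj cont])
  show ?thesis
  proof (rule DERIV_inverse_function[where a="f (x - d)" and b="f (x + d)"])
    show "DERIV f (g (f x)) :> D" using der gx by simp
    show "D \<noteq> 0" by (rule D)
    show "f (x - d) < f x" "f x < f (x + d)" by (rule lo, rule hi)
    show "isCont g (f x)" by (rule cg)
    fix y assume y: "f (x - d) < y" "y < f (x + d)"
    obtain z where z: "x - d \<le> z" "z \<le> x + d" "f z = y"
      using IVT[of f "x - d" y "x + d"] y d cont by (force simp: abs_le_iff)
    have "g y = z" using inj[of z] z by (simp add: abs_le_iff)
    then show "f (g y) = y" using z by simp
  qed
qed

context mkt begin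

lemma Yk_deriv: assumes k: "k > 0" and p: "p > 0"
  shows "DERIV (\<lambda>x. Y (x * k)) p :> dY (p * k) * k"
proof -
  have pk: "p * k > 0" using k p by simp
  have dk: "DERIV (\<lambda>x. x * k) p :> k" by (auto intro!: derivative_eq_intros)
  have "DERIV Y ((\<lambda>x. x * k) p) :> dY (p * k)" using Y_deriv[OF pk] by simp
  from DERIV_chain'[OF dk this] show ?thesis .
qed

lemma Yk_isCont: "k > 0 \<Longrightarrow> p > 0 \<Longrightarrow> isCont (\<lambda>x. Y (x * k)) p"
  using Yk_deriv DERIV_isCont by blast

lemma RR_isCont: "k > 0 \<Longrightarrow> p > 0 \<Longrightarrow> isCont (RR k) p"
  using RR_deriv DERIV_isCont by blast

lemma RR_le0: "k > 0 \<Longrightarrow> p > 0 \<Longrightarrow> p \<le> eta \<Longrightarrow> RR k p \<le> 0"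
  using Y_pos[of "p * k"] by (simp add: RR_def mult_nonpos_nonneg)

lemma RR_pos: "k > 0 \<Longrightarrow> p > eta \<Longrightarrow> RR k p > 0"
  using Y_pos[of "p * k"] eta by (simp add: RR_def)

definition "popt k = (SOME ph. ph > eta \<and> ph * k > q1 \<and> Sg k ph = 0 \<and> (\<forall>p. 0 < p \<and> p < ph \<longrightarrow> Sg k p > 0)
      \<and> (\<forall>p. ph < p \<longrightarrow> Sg k p < 0))"

lemma popt: assumes "k > 0"
  shows "popt k > eta" "popt k * k > q1" "Sg k (popt k) = 0" "\<And>p. 0 < p \<Longrightarrow> p < popt k \<Longrightarrow> Sg k p > 0"
    "\<And>p. popt k < p \<Longrightarrow> Sg k p < 0"
  using someI_ex[OF unimodal[OF assms]] unfolding popt_def[symmetric] by blast+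

lemma Sg_zero_iff: assumes "k > 0" "p > 0" shows "Sg k p = 0 \<longleftrightarrow> p = popt k"
  using popt[OF assms(1)] assms(2) by (cases p "popt k" rule: linorder_cases) force+

lemma RR_dsign: assumes k: "k > 0" and p: "p > 0"
  shows "DERIV (RR k) p :> k * N * mm (p * k) * Sg k p" "k * N * mm (p * k) > 0"
  using RR_deriv[OF k p] k N mm_pos[of "p * k"] p by auto

lemma RR_inc: assumes k: "k > 0" and "eta \<le> p" "p < p'" "p' \<le> popt k"
  shows "RR k p < RR k p'"
proof (rule DERIV_pos_imp_increasing_open[OF assms(3)])
  fix x assume x: "p < x" "x < p'"
  then have x0: "x > 0" using assms eta by simp
  have "Sg k x > 0" using popt(4)[OF k x0] x assms by simp
  then show "\<exists>y. DERIV (RR k) x :> y \<and> y > 0" using RR_dsign[OF k x0]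
    by (intro exI[of _ "k * N * mm (x * k) * Sg k x"] conjI) auto
next
  show "continuous_on {p..p'} (RR k)"
    using assms eta by (intro continuous_at_imp_continuous_on ballI RR_isCont) auto
qed

lemma RR_dec: assumes k: "k > 0" and "popt k \<le> p" "p < p'"
  shows "RR k p' < RR k p"
proof (rule DERIV_neg_imp_decreasing_open[OF assms(3)])
  fix x assume x: "p < x" "x < p'"
  have "Sg k x < 0" using popt(5)[OF k] x assms by simp
  moreover have x0: "x > 0" using popt(1)[OF k] assms x eta by simp
  ultimately show "\<exists>y. DERIV (RR k) x :> y \<and> y < 0" using RR_dsign[OF k x0]
    by (intro exI[of _ "k * N * mm (x * k) * Sg k x"] conjI) (auto simp: mult_pos_neg)
next
  have "p > 0" using popt(1)[OF k] assms eta by simp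
  then show "continuous_on {p..p'} (RR k)"
    using assms by (intro continuous_at_imp_continuous_on ballI RR_isCont) auto
qed

lemma RR_max: assumes k: "k > 0" and p: "p > 0" "p \<noteq> popt k"
  shows "RR k p < RR k (popt k)"
proof -
  have ph: "popt k > eta" using popt(1)[OF k] .
  have R0: "RR k (popt k) > 0" using RR_pos[OF k ph] .
  show ?thesis
  proof (cases "p \<le> eta")
    case True then show ?thesis using RR_le0[OF k p(1)] R0 by simp
  next
    case False
    show ?thesis
    proof (cases "p < popt k")
      case True then show ?thesis using RR_inc[OF k _ True] False by simp
    next
      case False2: False
      then have "popt k < p" using p by simp
      then show ?thesis using RR_dec[OF k order_refl] by simp
    qed
  qed
qed

end


context mkt begin

lemma Y_le: "q > 0 \<Longrightarrow> Y q \<le> N * mm q"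
  using rho_pos[of q] mm_pos[of q] N s by (simp add: Y_alt mult_left_le)

lemma exists_small: assumes c: "c > 0" and k: "k > 0"
  shows "\<exists>p. p > eta \<and> Y (p * k) \<le> c"
proof -
  define e where "e = c / N"
  have e: "e > 0" using c N by (simp add: e_def)
  define qc where "qc = th / e powr (1 - th)"
  have qc: "qc > 0" "U qc = e" using th e by (auto simp: qc_def U_inv)
  define p where "p = max eta (qc / k) + 1"
  have p: "p > eta" "p * k > qc" using k by (auto simp: p_def pos_divide_less_eq[symmetric])
  have "mm (p * k) \<le> e" using U_mono[of qc "p * k"] qc p by (simp add: mm_def)
  then have "Y (p * k) \<le> N * e" using Y_le[of "p * k"] p qc N by (smt (verit) mult_left_mono)
  then show ?thesis using p N by (intro exI[of _ p]) (simp add: e_def)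
qed

end


locale mkt2 = mkt +
  fixes C ka kp :: real and Xf :: "real \<Rightarrow> real \<Rightarrow> real"
    and R :: "real \<Rightarrow> real \<Rightarrow> real" and A :: "real \<Rightarrow> real \<Rightarrow> real \<Rightarrow> real"
    and P :: "real \<Rightarrow> real \<Rightarrow> real set" and p0 :: "real \<Rightarrow> real \<Rightarrow> real"
    and is_eq :: "real \<Rightarrow> real \<Rightarrow> real \<Rightarrow> bool" and peq :: "real \<Rightarrow> real \<Rightarrow> real"
  assumes Xf: "\<And>k p. k > 0 \<Longrightarrow> p > 0 \<Longrightarrow> Xf k p = Y (p * k)"
    and C: "C > 0" and ka: "ka > 0" and kp: "kp > 0"
    and R_eq: "R = (\<lambda>k p. (p - eta) * k * Xf k p)"
    and A_eq: "A = (\<lambda>k k' p. k' * Xf k p)"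
    and P_eq: "P = (\<lambda>k k'. {p. 0 < p \<and> R k p > 0 \<and> A k k' p \<le> C})"
    and p0_eq: "p0 = (\<lambda>k k'. Inf (P k k'))"
    and iseq_eq: "is_eq = (\<lambda>k k' p. p \<in> P k k' \<and> (\<forall>q\<in>P k k'. R k q \<le> R k p))"
    and peq_eq: "peq = (\<lambda>k k'. THE p. is_eq k k' p)"
begin

lemma Rk: "k > 0 \<Longrightarrow> p > 0 \<Longrightarrow> R k p = RR k p"
  by (simp add: R_eq RR_def Xf)

lemma Pmem: assumes k: "k > 0" shows "p \<in> P k k' \<longleftrightarrow> p > eta \<and> k' * Y (p * k) \<le> C"
proof
  assume "p \<in> P k k'"
  then have p: "p > 0" "R k p > 0" "k' * Y (p * k) \<le> C" using k by (auto simp: P_eq A_eq Xf)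
  then have "p > eta" using RR_le0[OF k p(1)] Rk[OF k p(1)] by force
  then show "p > eta \<and> k' * Y (p * k) \<le> C" using p by simp
next
  assume a: "p > eta \<and> k' * Y (p * k) \<le> C"
  then have p: "p > 0" using eta by simp
  show "p \<in> P k k'" using a p RR_pos[OF k] Rk[OF k p] k by (auto simp: P_eq A_eq Xf)
qed

lemma Rderiv: assumes k: "k > 0" and p: "p > 0"
  shows "DERIV (R k) p :> k * N * mm (p * k) * Sg k p"
  by (rule has_field_derivative_transform_within_open[OF RR_dsign(1)[OF k p], where S="{0<..}"])
     (use p Rk[OF k] in auto)

lemma deriv_R: "k > 0 \<Longrightarrow> p > 0 \<Longrightarrow> deriv (R k) p = k * N * mm (p * k) * Sg k p"
  using Rderiv DERIV_imp_deriv by blast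

lemma fac_pos: "k > 0 \<Longrightarrow> p > 0 \<Longrightarrow> k * N * mm (p * k) > 0"
  using RR_dsign(2) .

lemma eq_char: assumes k: "k > 0" and mem: "popt k \<in> P k k'"
  shows "(\<exists>!p. is_eq k k' p) \<and> peq k k' = popt k"
proof -
  have pos: "q \<in> P k k' \<Longrightarrow> q > 0" for q using Pmem[OF k] eta by force
  have e: "is_eq k k' (popt k)"
    unfolding iseq_eq
  proof (intro conjI ballI)
    show "popt k \<in> P k k'" by (rule mem)
    fix q assume q: "q \<in> P k k'"
    show "R k q \<le> R k (popt k)"
    proof (cases "q = popt k")
      case False
      then show ?thesis using RR_max[OF k pos[OF q] False] Rk[OF k pos[OF q]] Rk[OF k pos[OF mem]] by simp
    qed simp
  qed
  have u: "p = popt k" if "is_eq k k' p" for p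
  proof (rule ccontr)
    assume ne: "p \<noteq> popt k"
    have pP: "p \<in> P k k'" and le: "R k (popt k) \<le> R k p"
      using that mem unfolding iseq_eq by blast+
    have "RR k p < RR k (popt k)" using RR_max[OF k pos[OF pP] ne] .
    then show False using le Rk[OF k pos[OF pP]] Rk[OF k pos[OF mem]] by simp
  qed
  have "peq k k' = popt k" unfolding peq_eq using e u by (intro the_equality) 
  then show ?thesis using e u by blast
qed

lemma Pne: "P ka kp \<noteq> {}"
proof -
  obtain p where "p > eta" "Y (p * ka) \<le> C / kp" using exists_small[of "C / kp" ka] C kp ka by auto
  then have "p \<in> P ka kp" using Pmem[OF ka] kp by (simp add: pos_le_divide_eq mult.commute)
  then show ?thesis by auto
qed

lemma Pbdd: "bdd_below (P ka kp)"
  using Pmem[OF ka] by (auto intro!: bdd_belowI[of _ eta] less_imp_le)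

lemma Pup: assumes "x \<in> P ka k'" "x \<le> z" "k' > 0" shows "z \<in> P ka k'"
proof -
  have x: "x > eta" "k' * Y (x * ka) \<le> C" using assms Pmem[OF ka] by auto
  have "Y (z * ka) \<le> Y (x * ka)" using Y_mono[of "x * ka" "z * ka"] x ka eta assms
    by (simp add: mult_right_mono)
  then have "k' * Y (z * ka) \<le> C" using x assms(3) by (smt (verit) mult_left_mono)
  then show ?thesis using Pmem[OF ka] x assms by simp
qed

lemma p0_ge: "p0 ka kp \<ge> eta"
proof -
  have "eta \<le> Inf (P ka kp)"
  proof (rule cInf_greatest[OF Pne])
    fix x assume "x \<in> P ka kp"
    then show "eta \<le> x" using Pmem[OF ka] by auto
  qed
  then show ?thesis by (simp add: p0_eq)
qed

lemma part1:
  "(\<forall>p>0. R ka differentiable (at p))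
      \<and> (\<exists>ph>eta. (\<forall>p. eta \<le> p \<and> p < ph \<longrightarrow> deriv (R ka) p > 0)
               \<and> deriv (R ka) ph = 0
               \<and> (\<forall>p>ph. deriv (R ka) p < 0))
      \<and> P ka kp \<noteq> {} \<and> connected (P ka kp)"
proof (intro conjI)
  show "\<forall>p>0. R ka differentiable (at p)"
    using Rderiv[OF ka] by (auto simp: real_differentiable_def)
  show "\<exists>ph>eta. (\<forall>p. eta \<le> p \<and> p < ph \<longrightarrow> deriv (R ka) p > 0)
               \<and> deriv (R ka) ph = 0 \<and> (\<forall>p>ph. deriv (R ka) p < 0)"
  proof (intro exI[of _ "popt ka"] conjI allI impI)
    show "popt ka > eta" using popt(1)[OF ka] .
    fix p assume p: "eta \<le> p \<and> p < popt ka"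
    then have "p > 0" using eta by simp
    then show "deriv (R ka) p > 0" using deriv_R[OF ka] fac_pos[OF ka] popt(4)[OF ka] p by simp
  next
    have "popt ka > 0" using popt(1)[OF ka] eta by simp
    then show "deriv (R ka) (popt ka) = 0" using deriv_R[OF ka] popt(3)[OF ka] by simp
  next
    fix p assume p: "popt ka < p"
    then have "p > 0" using popt(1)[OF ka] eta by simp
    then show "deriv (R ka) p < 0" using deriv_R[OF ka] fac_pos[OF ka] popt(5)[OF ka] p
      by (simp add: mult_pos_neg)
  qed
  show "P ka kp \<noteq> {}" by (rule Pne)
  show "connected (P ka kp)"
    unfolding connected_iff_interval
  proof (intro ballI allI impI)
    fix x y z assume "x \<in> P ka kp" "x \<le> z"
    then show "z \<in> P ka kp" using Pup kp by blast
  qed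
qed

end


lemma sgn_helper: "0 < (c::real) \<Longrightarrow> c * y < 0 \<Longrightarrow> y < 0" "0 < (c::real) \<Longrightarrow> c * y > 0 \<Longrightarrow> y > 0"
  "0 < (c::real) \<Longrightarrow> c * y = 0 \<Longrightarrow> y = 0"
  by (auto simp: mult_less_0_iff zero_less_mult_iff)

context mkt2 begin

lemma F_isCont: "k > 0 \<Longrightarrow> x > 0 \<Longrightarrow> isCont (\<lambda>p. kk * Y (p * k) - C) x"
  by (intro continuous_intros Yk_isCont) auto

lemma part2: assumes neg: "deriv (R ka) (p0 ka kp) < 0"
  shows "(\<exists>!p. is_eq ka kp p) \<and> peq ka kp = p0 ka kp \<and> A ka kp (p0 ka kp) = C
        \<and> (\<exists>D>0. ((\<lambda>k'. p0 ka k') has_real_derivative D) (at kp))"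
proof -
  define x0 where "x0 = p0 ka kp"
  have x0I: "x0 = Inf (P ka kp)" by (simp add: x0_def p0_eq)
  have x0pos: "x0 > 0" using p0_ge eta by (simp add: x0_def)
  have "Sg ka x0 < 0"
    using neg deriv_R[OF ka x0pos] sgn_helper(1)[OF fac_pos[OF ka x0pos]] by (simp add: x0_def)
  then have x0gt: "x0 > popt ka"
    using popt(3,4)[OF ka] x0pos by (cases x0 "popt ka" rule: linorder_cases) force+
  have x0eta: "x0 > eta" using x0gt popt(1)[OF ka] by simp
  have lowb: "x0 \<le> x" if "x \<in> P ka kp" for x
    unfolding x0I using that Pbdd by (rule cInf_lower)
  have Fc: "isCont (\<lambda>p. kp * Y (p * ka) - C) x0" using F_isCont[OF ka x0pos] .
  have le: "kp * Y (x0 * ka) \<le> C"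
  proof (rule ccontr)
    assume "\<not> ?thesis"
    then have "kp * Y (x0 * ka) - C > 0" by simp
    then obtain r where r: "r > 0" "\<And>x. x \<noteq> x0 \<and> \<bar>x0 - x\<bar> < r \<Longrightarrow> 0 < kp * Y (x * ka) - C"
      using LIM_fun_gt_zero[OF Fc[unfolded isCont_def]] by blast
    obtain x where x: "x \<in> P ka kp" "x < x0 + r"
      using cInf_lessD[OF Pne, of "x0 + r"] r x0I by auto
    have "x0 \<le> x" using lowb x(1) .
    show False
    proof (cases "x = x0")
      case True
      then show False using x(1) Pmem[OF ka] \<open>\<not> kp * Y (x0 * ka) \<le> C\<close> by auto
    next
      case False
      then have "0 < kp * Y (x * ka) - C" using r(2)[of x] x \<open>x0 \<le> x\<close> by simp
      then show False using x(1) Pmem[OF ka] by auto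
    qed
  qed
  have x0P: "x0 \<in> P ka kp" using Pmem[OF ka] le x0eta by simp
  have eqC: "kp * Y (x0 * ka) = C"
  proof (rule ccontr)
    assume "\<not> ?thesis"
    then have "kp * Y (x0 * ka) - C < 0" using le by simp
    then obtain r where r: "r > 0" "\<And>x. x \<noteq> x0 \<and> \<bar>x0 - x\<bar> < r \<Longrightarrow> kp * Y (x * ka) - C < 0"
      using LIM_fun_less_zero[OF Fc[unfolded isCont_def]] by blast
    define m where "m = min r (x0 - eta)"
    have m: "m > 0" "m \<le> x0 - eta" "m \<le> r"
      using r x0eta by (auto simp: m_def)
    define x where "x = x0 - m / 2"
    have x: "x < x0" "x > eta" "\<bar>x0 - x\<bar> < r" using m unfolding x_def by auto
    then have "kp * Y (x * ka) - C < 0" using r(2)[of x] by simp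
    then have "x \<in> P ka kp" using Pmem[OF ka] x by simp
    then show False using lowb x by fastforce
  qed
  have iseq0: "is_eq ka kp x0"
    unfolding iseq_eq
  proof (intro conjI ballI)
    show "x0 \<in> P ka kp" by (rule x0P)
    fix q assume q: "q \<in> P ka kp"
    have "x0 \<le> q" using lowb q .
    show "R ka q \<le> R ka x0"
    proof (cases "q = x0")
      case False
      then have "RR ka q < RR ka x0" using RR_dec[OF ka _] x0gt \<open>x0 \<le> q\<close> by simp
      then show ?thesis using Rk[OF ka] x0pos \<open>x0 \<le> q\<close> by simp
    qed simp
  qed
  have uniq: "p = x0" if "is_eq ka kp p" for p
  proof (rule ccontr)
    assume ne: "p \<noteq> x0"
    have pP: "p \<in> P ka kp" and lR: "R ka x0 \<le> R ka p" using that x0P unfolding iseq_eq by blast+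
    have "x0 < p" using lowb[OF pP] ne by simp
    then have "RR ka p < RR ka x0" using RR_dec[OF ka _] x0gt by simp
    then show False using lR Rk[OF ka] x0pos \<open>x0 < p\<close> by simp
  qed
  have peq0: "peq ka kp = x0" unfolding peq_eq using iseq0 uniq by (intro the_equality)
  have A0: "A ka kp x0 = C" using eqC by (simp add: A_eq Xf[OF ka x0pos])
  define f where "f p = C / Y (p * ka)" for p
  define M where "M = max eta (q1 / ka)"
  have M: "eta \<le> M" "q1 / ka \<le> M" by (auto simp: M_def)
  define d where "d = (x0 - M) / 2"
  have phq: "popt ka > q1 / ka" using popt(2)[OF ka] ka by (simp add: divide_less_eq)
  have x0M: "x0 > M" using x0gt popt(1)[OF ka] phq by (simp add: M_def)
  have d: "d > 0" using x0M by (simp add: d_def)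
  have zprops: "z > eta" "z * ka > q1" "z > 0" if "\<bar>z - x0\<bar> \<le> d" for z
  proof -
    have "z \<ge> x0 - d" using that by simp
    moreover have "x0 - d > M" using x0M unfolding d_def by (simp add: field_simps)
    ultimately have "z > eta" "z > q1 / ka" using M by auto
    then show "z > eta" "z * ka > q1" "z > 0" using ka eta by (auto simp: divide_less_eq)
  qed
  have inj: "Inf (P ka (f z)) = z" if z: "\<bar>z - x0\<bar> \<le> d" for z
  proof -
    note zp = zprops[OF z]
    have Yz: "Y (z * ka) > 0" using Y_pos zp ka by simp
    have "P ka (f z) = {z..}"
    proof (intro set_eqI iffI)
      fix p assume "p \<in> P ka (f z)"
      then have p: "p > eta" "C / Y (z * ka) * Y (p * ka) \<le> C" using Pmem[OF ka] by (auto simp: f_def)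
      have "Y (p * ka) \<le> Y (z * ka)" using p(2) C Yz by (simp add: field_simps)
      then show "p \<in> {z..}"
        using Y_strict[of "p * ka" "z * ka"] p(1) eta ka zp by (force simp: not_le)
    next
      fix p assume "p \<in> {z..}"
      then have p: "z \<le> p" by simp
      have "Y (p * ka) \<le> Y (z * ka)" using Y_mono[of "z * ka" "p * ka"] p zp ka by simp
      then have "C / Y (z * ka) * Y (p * ka) \<le> C" using C Yz by (simp add: field_simps)
      then show "p \<in> P ka (f z)" using Pmem[OF ka] p zp by (simp add: f_def)
    qed
    then show ?thesis by simp
  qed
  have contf: "isCont f z" if "\<bar>z - x0\<bar> \<le> d" for z
    unfolding f_def[abs_def] using zprops[OF that] Y_pos[of "z * ka"] ka
    by (intro continuous_intros Yk_isCont) auto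
  have Ylo: "Y (x0 * ka) < Y ((x0 - d) * ka)"
    using Y_strict[of "(x0 - d) * ka" "x0 * ka"] zprops[of "x0 - d"] zprops[of x0] d ka by simp
  have Yhi: "Y ((x0 + d) * ka) < Y (x0 * ka)"
    using Y_strict[of "x0 * ka" "(x0 + d) * ka"] zprops[of "x0 + d"] zprops[of x0] d ka by simp
  have lo: "f (x0 - d) < f x0" unfolding f_def
    using Ylo C Y_pos[of "x0 * ka"] x0pos ka by (intro divide_strict_left_mono) auto
  have hi: "f x0 < f (x0 + d)" unfolding f_def
    using Yhi C Y_pos[of "(x0 + d) * ka"] zprops[of "x0 + d"] d ka by (intro divide_strict_left_mono) auto
  define D where "D = (0 * Y (x0 * ka) - C * (dY (x0 * ka) * ka)) / (Y (x0 * ka) * Y (x0 * ka))"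
  have der: "DERIV f x0 :> D"
    unfolding f_def[abs_def] D_def
    by (rule DERIV_divide[OF DERIV_const Yk_deriv[OF ka x0pos]]) (use Y_pos[of "x0 * ka"] x0pos ka in simp)
  have Dpos: "D > 0"
  proof -
    have "dY (x0 * ka) < 0" using dY_neg[of "x0 * ka"] zprops[of x0] d by simp
    then have "C * (dY (x0 * ka) * ka) < 0" using C ka by (simp add: mult_pos_neg mult_neg_pos)
    moreover have "Y (x0 * ka) * Y (x0 * ka) > 0" using Y_pos[of "x0 * ka"] x0pos ka by simp
    ultimately show ?thesis by (simp add: D_def divide_neg_pos)
  qed
  have "DERIV (\<lambda>k'. Inf (P ka k')) (f x0) :> inverse D"
    by (rule inv_deriv[OF d _ contf lo hi der]) (use Dpos inj in auto)
  moreover have "f x0 = kp" using eqC Y_pos[of "x0 * ka"] x0pos ka by (simp add: f_def field_simps)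
  ultimately have "DERIV (\<lambda>k'. p0 ka k') kp :> inverse D" by (simp add: p0_eq)
  moreover have "\<exists>!p. is_eq ka kp p" using iseq0 uniq by blast
  ultimately show ?thesis using peq0 A0 Dpos
    by (auto simp: x0_def intro!: exI[of _ "inverse D"])
qed

end


context mkt begin

definition "rt z = (U z / Pm) powr (1 - s)"
definition "hh z = 1 - psi2 (rt z) / bet"
definition "KK z = z * hh z / eta"

lemma rt_rho: assumes "z > q1" shows "rho z = rt z"
proof -
  have z: "z > 0" using assms q1_pos by simp
  have "U z < Pm" using U_lt_Pm[OF z] assms by simp
  then show ?thesis by (simp add: rho_def rt_def mm_def)
qed

lemma rt_bounds: assumes "z > q1" shows "rt z < 1" "rt z > 0"
  using rt_rho[OF assms] rho_lt1[OF assms] rho_pos[of z] assms q1_pos by auto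

lemma hh_mono: assumes "q1 < z" "z \<le> z'" shows "hh z \<le> hh z'"
proof -
  have z: "z > 0" using assms q1_pos by simp
  have "rho z' \<le> rho z" by (rule rho_mono[OF z assms(2)])
  then have "rt z' \<le> rt z" using rt_rho assms by simp
  then have "psi2 (rt z') \<le> psi2 (rt z)"
    using rt_bounds[of z] rt_bounds[of z'] assms by (intro psi2_mono) auto
  then show ?thesis using bet_gt1 by (simp add: hh_def divide_right_mono)
qed

lemma psi2_deriv: assumes "y < 1"
  shows "DERIV psi2 y :> (1 - 1 / (2 - s)) / ((1 - y) * (1 - y))"
  unfolding psi2_def[abs_def] using assms
  by (auto intro!: derivative_eq_intros simp: power2_eq_square)

lemma hh_deriv: assumes z: "z > q1" shows "\<exists>H. DERIV hh z :> H"
proof -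
  have z0: "z > 0" using z q1_pos by simp
  have d1: "DERIV (\<lambda>z. U z / Pm) z :> (- bet * U z / z) / Pm"
    using U_deriv[OF z0] by (rule DERIV_cdivide)
  have d2: "DERIV rt z :> (1 - s) * (U z / Pm) powr (1 - s - of_nat 1) * ((- bet * U z / z) / Pm)"
    unfolding rt_def[abs_def] by (rule DERIV_fun_powr[OF d1]) (use U_pos[OF z0] Pm in simp)
  have d3: "DERIV psi2 (rt z) :> (1 - 1 / (2 - s)) / ((1 - rt z) * (1 - rt z))"
    by (rule psi2_deriv[OF rt_bounds(1)[OF z]])
  have d4: "DERIV (\<lambda>z. psi2 (rt z)) z :> (1 - 1 / (2 - s)) / ((1 - rt z) * (1 - rt z)) *
      ((1 - s) * (U z / Pm) powr (1 - s - of_nat 1) * ((- bet * U z / z) / Pm))"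
    by (rule DERIV_chain'[OF d2 d3])
  have "DERIV (\<lambda>z. 1 - psi2 (rt z) / bet) z :> 0 - (1 - 1 / (2 - s)) / ((1 - rt z) * (1 - rt z)) *
      ((1 - s) * (U z / Pm) powr (1 - s - of_nat 1) * ((- bet * U z / z) / Pm)) / bet"
    by (rule DERIV_diff[OF DERIV_const DERIV_cdivide[OF d4]])
  then show ?thesis unfolding hh_def[abs_def] by blast
qed

lemma hh_deriv_nonneg: assumes z: "z > q1" and H: "DERIV hh z :> H" shows "H \<ge> 0"
proof (rule ccontr)
  assume "\<not> H \<ge> 0"
  then have "H < 0" by simp
  from DERIV_neg_dec_right[OF H this] obtain e where e: "e > 0" "\<And>h. h > 0 \<Longrightarrow> h < e \<Longrightarrow> hh z > hh (z + h)"
    by blast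
  have "hh z > hh (z + e / 2)" using e by simp
  moreover have "hh z \<le> hh (z + e / 2)" using hh_mono[OF z] e by simp
  ultimately show False by simp
qed

lemma KK_deriv: assumes z: "z > q1" and H: "DERIV hh z :> H"
  shows "DERIV KK z :> (1 * hh z + H * z) / eta"
  unfolding KK_def[abs_def]
  by (rule DERIV_cdivide[OF DERIV_mult[OF DERIV_ident H]])

lemma KK_isCont: assumes "z > q1" shows "isCont KK z"
  using hh_deriv[OF assms] KK_deriv[OF assms] DERIV_isCont by blast

end


context mkt2 begin

lemma part3: assumes pos: "deriv (R ka) (p0 ka kp) > 0"
  shows "(\<exists>!p. is_eq ka kp p) \<and> A ka kp (peq ka kp) \<noteq> C
        \<and> deriv (R ka) (peq ka kp) = 0
        \<and> (\<forall>p>0. deriv (R ka) p = 0 \<longrightarrow> p = peq ka kp)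
        \<and> (\<exists>D>0. ((\<lambda>k. peq k kp * k) has_real_derivative D) (at ka))"
proof -
  define x0 where "x0 = p0 ka kp"
  define ph where "ph = popt ka"
  have x0I: "x0 = Inf (P ka kp)" by (simp add: x0_def p0_eq)
  have x0pos: "x0 > 0" using p0_ge eta by (simp add: x0_def)
  have "Sg ka x0 > 0"
    using pos deriv_R[OF ka x0pos] sgn_helper(2)[where y="Sg ka x0", OF fac_pos[OF ka x0pos]] by (simp add: x0_def)
  then have x0lt: "x0 < ph"
  proof -
    assume S: "Sg ka x0 > 0"
    show ?thesis
    proof (rule ccontr)
      assume "\<not> x0 < ph"
      then have "x0 = popt ka \<or> popt ka < x0" by (auto simp: ph_def)
      then show False using popt(3)[OF ka] popt(5)[OF ka, of x0] S by auto
    qed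
  qed
  obtain x where x: "x \<in> P ka kp" "x < ph" using cInf_lessD[OF Pne, of ph] x0lt x0I by auto
  have xP: "x > eta" "kp * Y (x * ka) \<le> C" using x(1) Pmem[OF ka] by auto
  have ph: "ph > eta" "ph * ka > q1" "Sg ka ph = 0" using popt(1-3)[OF ka] by (auto simp: ph_def)
  have ph0: "ph > 0" using ph eta by simp
  have Yph: "Y (ph * ka) < Y (x * ka)"
    using Y_strict[of "x * ka" "ph * ka"] xP x ph ka eta by simp
  have AltC: "kp * Y (ph * ka) < C" using Yph kp xP by (smt (verit) mult_strict_left_mono)
  have phP: "ph \<in> P ka kp" using Pmem[OF ka] ph AltC by simp
  have ec: "(\<exists>!p. is_eq ka kp p) \<and> peq ka kp = ph" using eq_char[OF ka] phP by (simp add: ph_def)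
  have peqph: "peq ka kp = ph" using ec by simp
  have Ane: "A ka kp (peq ka kp) \<noteq> C" using AltC peqph by (simp add: A_eq Xf[OF ka ph0])
  have d0: "deriv (R ka) (peq ka kp) = 0" using peqph deriv_R[OF ka ph0] ph by simp
  have dz: "\<forall>p>0. deriv (R ka) p = 0 \<longrightarrow> p = peq ka kp"
  proof (intro allI impI)
    fix p :: real assume p: "p > 0" "deriv (R ka) p = 0"
    then have "Sg ka p = 0" using deriv_R[OF ka p(1)] sgn_helper(3)[where y="Sg ka p", OF fac_pos[OF ka p(1)]] by simp
    then show "p = peq ka kp" using Sg_zero_iff[OF ka p(1)] peqph by (simp add: ph_def)
  qed
  define qs where "qs = ph * ka"
  define qx where "qx = x * ka"
  have qs: "qs > q1" "qs > 0" using ph ka ph0 by (auto simp: qs_def)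
  have qx: "qx > 0" "qx < qs" using xP x ka eta by (auto simp: qx_def qs_def)
  have Tf0: "Tf ka ph = 0" using Sg_Tf[OF ka ph(2)] ph(3) by simp
  have hqs: "hh qs = eta / ph"
    using Tf0 rt_rho[OF qs(1)] bet_gt1 unfolding Tf_def hh_def qs_def by (simp add: field_simps)
  have hqs_pos: "hh qs > 0" using hqs eta ph0 by simp
  have KKqs: "KK qs = ka" using hqs eta ph0 by (simp add: KK_def qs_def)
  obtain r where r: "r > 0" "\<And>z. z \<noteq> qs \<and> \<bar>qs - z\<bar> < r \<Longrightarrow> 0 < KK z"
    using LIM_fun_gt_zero[OF KK_isCont[OF qs(1), unfolded isCont_def]] KKqs ka by auto
  define d where "d = min (min ((qs - q1) / 2) ((qs - qx) / 2)) (r / 2)"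
  have d: "d > 0" "d \<le> (qs - q1) / 2" "d \<le> (qs - qx) / 2" "d \<le> r / 2"
    using qs qx r unfolding d_def by (simp_all add: min_def)
  have zp: "z > q1" "z \<ge> qx" "KK z > 0" "z > 0" if "\<bar>z - qs\<bar> \<le> d" for z
  proof -
    show "z > q1" "z \<ge> qx" using that d by auto
    then show "z > 0" using q1_pos by simp
    show "KK z > 0"
    proof (cases "z = qs")
      case True then show ?thesis using KKqs ka by simp
    next
      case False then show ?thesis using r(2)[of z] that d by auto
    qed
  qed
  have inj: "peq (KK z) kp * KK z = z" if z: "\<bar>z - qs\<bar> \<le> d" for z
  proof -
    note zz = zp[OF z]
    define k where "k = KK z"
    have k: "k > 0" using zz by (simp add: k_def)
    define p where "p = z / k"
    have p: "p > 0" "p * k = z" using k zz by (auto simp: p_def)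
    have epk: "eta / p = hh z" using k eta zz by (simp add: p_def k_def KK_def field_simps)
    have "Tf k p = 0"
      using rt_rho[of z] zz p epk bet_gt1 unfolding Tf_def hh_def by (simp add: field_simps)
    then have "Sg k p = 0" using Sg_Tf[OF k] p zz by simp
    then have pe: "p = popt k" using Sg_zero_iff[OF k p(1)] by simp
    have "Y z \<le> Y qx" using Y_mono[of qx z] qx zz by simp
    then have "kp * Y (popt k * k) \<le> C" using p pe kp xP by (smt (verit) mult_left_mono qx_def)
    then have "popt k \<in> P k kp" using Pmem[OF k] popt(1)[OF k] by simp
    then have "peq k kp = popt k" using eq_char[OF k] by simp
    then show ?thesis using p pe by (simp add: k_def)
  qed
  have cont: "isCont KK z" if "\<bar>z - qs\<bar> \<le> d" for z using KK_isCont zp[OF that] by simp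
  obtain H where H: "DERIV hh qs :> H" using hh_deriv[OF qs(1)] by blast
  have H0: "H \<ge> 0" using hh_deriv_nonneg[OF qs(1) H] .
  define DK where "DK = (1 * hh qs + H * qs) / eta"
  have der: "DERIV KK qs :> DK" unfolding DK_def by (rule KK_deriv[OF qs(1) H])
  have DK: "DK > 0" using hqs_pos H0 qs eta by (simp add: DK_def add_pos_nonneg)
  have lo: "KK (qs - d) < KK qs"
  proof -
    have z: "\<bar>(qs - d) - qs\<bar> \<le> d" using d by simp
    have "hh (qs - d) \<le> hh qs" using hh_mono[of "qs - d" qs] zp[OF z] d by simp
    then have "(qs - d) * hh (qs - d) \<le> (qs - d) * hh qs" using zp[OF z] by (simp add: mult_left_mono)
    also have "\<dots> < qs * hh qs" using d hqs_pos by (simp add: mult_strict_right_mono)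
    finally show ?thesis using eta by (simp add: KK_def divide_strict_right_mono)
  qed
  have hi: "KK qs < KK (qs + d)"
  proof -
    have "hh qs \<le> hh (qs + d)" using hh_mono[of qs "qs + d"] qs d by simp
    then have "(qs + d) * hh qs \<le> (qs + d) * hh (qs + d)" using qs d by (simp add: mult_left_mono)
    moreover have "qs * hh qs < (qs + d) * hh qs" using d hqs_pos by (simp add: mult_strict_right_mono)
    ultimately show ?thesis using eta by (simp add: KK_def divide_strict_right_mono)
  qed
  have "DERIV (\<lambda>k. peq k kp * k) (KK qs) :> inverse DK"
    by (rule inv_deriv[OF d(1) inj cont lo hi der]) (use DK in auto)
  then have "DERIV (\<lambda>k. peq k kp * k) ka :> inverse DK" using KKqs by simp
  then have "\<exists>D>0. ((\<lambda>k. peq k kp * k) has_real_derivative D) (at ka)"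
    using DK by (intro exI[of _ "inverse DK"]) simp
  then show ?thesis using ec Ane d0 dz by blast
qed

end


context mkt begin

lemma Xtot_eq: assumes w_sum: "(\<Sum>t = 1..nT. w t) = 1" and k: "k > 0" and p: "p > 0"
  shows "Xtot N Pm s nT w th k p = Y (p * k)"
proof -
  have uc: "user_cap th k p = U (p * k)" by (simp add: user_cap_def U_def bet_def)
  have upos: "U (p * k) > 0" using U_pos k p by simp
  have "(\<lambda>x. (\<Sum>t = 1..nT. xstar w th k p x t) * dens s Pm x) = (\<lambda>x. min x (U (p * k)) * dens s Pm x)"
  proof
    fix x
    have "(\<Sum>t = 1..nT. xstar w th k p x t) = (\<Sum>t = 1..nT. w t) * min x (U (p * k))"
      by (simp add: xstar_def uc sum_distrib_right)
    then show "(\<Sum>t = 1..nT. xstar w th k p x t) * dens s Pm x = min x (U (p * k)) * dens s Pm x"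
      using w_sum by simp
  qed
  then have "Xtot N Pm s nT w th k p = N * integral {0..Pm} (\<lambda>x. min x (U (p * k)) * dens s Pm x)"
    by (simp add: Xtot_def)
  also have "\<dots> = Y (p * k)"
    using integral_closed[OF s Pm upos] by (simp add: Y_def psi_def)
  finally show ?thesis .
qed

end

theorem proposition2:
  fixes N Phimax \<sigma> \<theta> \<eta> C ka kp :: real
    and nT :: nat and w :: "nat \<Rightarrow> real"
    and X :: "real \<Rightarrow> real \<Rightarrow> real"
    and R :: "real \<Rightarrow> real \<Rightarrow> real"
    and A :: "real \<Rightarrow> real \<Rightarrow> real \<Rightarrow> real"
    and P :: "real \<Rightarrow> real \<Rightarrow> real set"
    and p0 :: "real \<Rightarrow> real \<Rightarrow> real"
    and is_eq :: "real \<Rightarrow> real \<Rightarrow> real \<Rightarrow> bool"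
    and peq :: "real \<Rightarrow> real \<Rightarrow> real"
  assumes N_pos: "N > 0" and C_pos: "C > 0" and Phimax_pos: "Phimax > 0"
    and sigma: "0 < \<sigma>" "\<sigma> < 1"
    and theta: "0 < \<theta>" "\<theta> < 1"
    and eta_pos: "\<eta> > 0"
    and nT_pos: "nT \<ge> 1"
    and w_pos: "\<forall>t\<in>{1..nT}. w t > 0" and w_sum: "(\<Sum>t = 1..nT. w t) = 1"
    and ka: "0 < ka" "ka \<le> 1" and kp: "0 < kp" "kp \<le> 1"
  defines "X \<equiv> \<lambda>k p. Xtot N Phimax \<sigma> nT w \<theta> k p"
    and "R \<equiv> \<lambda>k p. (p - \<eta>) * k * X k p"
    and "A \<equiv> \<lambda>k k' p. k' * X k p"
    and "P \<equiv> \<lambda>k k'. {p. 0 < p \<and> R k p > 0 \<and> A k k' p \<le> C}"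
    and "p0 \<equiv> \<lambda>k k'. Inf (P k k')"
    and "is_eq \<equiv> \<lambda>k k' p. p \<in> P k k' \<and> (\<forall>q\<in>P k k'. R k q \<le> R k p)"
    and "peq \<equiv> \<lambda>k k'. THE p. is_eq k k' p"
  shows
    "((\<forall>p>0. R ka differentiable (at p))
      \<and> (\<exists>ph>\<eta>. (\<forall>p. \<eta> \<le> p \<and> p < ph \<longrightarrow> deriv (R ka) p > 0)
               \<and> deriv (R ka) ph = 0
               \<and> (\<forall>p>ph. deriv (R ka) p < 0))
      \<and> P ka kp \<noteq> {} \<and> connected (P ka kp))
   \<and> (deriv (R ka) (p0 ka kp) < 0 \<longrightarrow>
        (\<exists>!p. is_eq ka kp p) \<and> peq ka kp = p0 ka kp
        \<and> A ka kp (p0 ka kp) = C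
        \<and> (\<exists>D>0. ((\<lambda>k'. p0 ka k') has_real_derivative D) (at kp)))
   \<and> (deriv (R ka) (p0 ka kp) > 0 \<longrightarrow>
        (\<exists>!p. is_eq ka kp p) \<and> A ka kp (peq ka kp) \<noteq> C
        \<and> deriv (R ka) (peq ka kp) = 0
        \<and> (\<forall>p>0. deriv (R ka) p = 0 \<longrightarrow> p = peq ka kp)
        \<and> (\<exists>D>0. ((\<lambda>k. peq k kp * k) has_real_derivative D) (at ka)))"
proof -
  interpret M: mkt N Phimax \<sigma> \<theta> \<eta>
    by unfold_locales (use N_pos Phimax_pos sigma theta eta_pos in auto)
  have Xf: "\<And>k p. k > 0 \<Longrightarrow> p > 0 \<Longrightarrow> X k p = M.Y (p * k)"
    unfolding X_def using M.Xtot_eq[OF w_sum] by blast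
  interpret M2: mkt2 N Phimax \<sigma> \<theta> \<eta> C ka kp X R A P p0 is_eq peq
  proof (unfold_locales)
    show "\<And>k p. k > 0 \<Longrightarrow> p > 0 \<Longrightarrow> X k p = M.Y (p * k)" by (rule Xf)
  qed (use C_pos ka kp in \<open>simp_all add: R_def A_def P_def p0_def is_eq_def peq_def\<close>)
  show ?thesis using M2.part1 M2.part2 M2.part3 by blast
qed


end
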